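(* For every even $n\ge2$ and every alphabet $\Sigma$, $\mathsf{sumPI}(\mathrm{Col})\le2$.
   Context: The collision problem $\mathrm{Col}$ is the partial function on $S\subseteq\Sigma^n$ where $S$ consists of the positive inputs, $x=x_1\cdots x_n$ with all $x_i$ distinct ($\mathrm{Col}(x)=1$), and the negative inputs, $x$ such that for each $i$ there is exactly one $j\neq i$ with $x_i=x_j$ ($\mathrm{Col}(x)=0$). For $f:S\to\{0,1\}$, $S\subseteq\Sigma^n$, with $p=\{p_x:x\in S\}$ ranging over families of probability distributions on $[n]$, $$\mathsf{sumPI}(f)=\min_{p}\ \max_{x,y\in S:\ f(x)\neq f(y)} \frac{1}{\sum_{i:\,x_i\neq y_i}\sqrt{p_x(i)p_y(i)}}.$$ *)

theory Defs
  imports Complex_Main "HOL-Library.Extended_Real"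
begin

text \<open>Inputs are strings of length n over an alphabet Sigma, represented as lists;
  the index set [n] is {0..<n}.\<close>

definition inputs :: "nat \<Rightarrow> 'a set \<Rightarrow> 'a list set" where
  "inputs n \<Sigma> = {x. length x = n \<and> set x \<subseteq> \<Sigma>}"

definition Col_pos :: "nat \<Rightarrow> 'a set \<Rightarrow> 'a list set" where
  "Col_pos n \<Sigma> = {x \<in> inputs n \<Sigma>. distinct x}"

definition Col_neg :: "nat \<Rightarrow> 'a set \<Rightarrow> 'a list set" where
  "Col_neg n \<Sigma> = {x \<in> inputs n \<Sigma>.
      \<forall>i<n. \<exists>!j. j < n \<and> j \<noteq> i \<and> x ! i = x ! j}"

text \<open>Domain S of the partial function Col, and its values (True = 1, False = 0).\<close>
definition Col_dom :: "nat \<Rightarrow> 'a set \<Rightarrow> 'a list set" where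
  "Col_dom n \<Sigma> = Col_pos n \<Sigma> \<union> Col_neg n \<Sigma>"

definition Col :: "nat \<Rightarrow> 'a set \<Rightarrow> 'a list \<Rightarrow> bool" where
  "Col n \<Sigma> x = (x \<in> Col_pos n \<Sigma>)"

definition prob_dist :: "nat \<Rightarrow> (nat \<Rightarrow> real) \<Rightarrow> bool" where
  "prob_dist n q \<longleftrightarrow> (\<forall>i<n. 0 \<le> q i) \<and> (\<Sum>i<n. q i) = 1"

definition ereal_recip :: "real \<Rightarrow> ereal" where
  "ereal_recip s = (if s = 0 then \<infinity> else ereal (1 / s))"

text \<open>sumPI(f) for a partial function f : S \<rightarrow> {0,1}, S \<subseteq> \<Sigma>^n.
  The minimum over p is rendered as an infimum, the maximum over pairs as a supremum.\<close>
definition sumPI :: "nat \<Rightarrow> 'a list set \<Rightarrow> ('a list \<Rightarrow> bool) \<Rightarrow> ereal" where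
  "sumPI n S f =
     (INF p \<in> {p :: 'a list \<Rightarrow> nat \<Rightarrow> real. \<forall>x\<in>S. prob_dist n (p x)}.
        SUP xy \<in> {(x, y). x \<in> S \<and> y \<in> S \<and> f x \<noteq> f y}.
          ereal_recip (\<Sum>i \<in> {i. i < n \<and> fst xy ! i \<noteq> snd xy ! i}.
                          sqrt (p (fst xy) i * p (snd xy) i)))"

end

theory Submission
  imports Defs
begin

lemma disagree_card:
  assumes x: "x \<in> Col_pos n \<Sigma>" and y: "y \<in> Col_neg n \<Sigma>"
  shows "n \<le> 2 * card {i. i < n \<and> x ! i \<noteq> y ! i}"
proof -
  have lx: "length x = n" and dx: "distinct x" using x by (auto simp: Col_pos_def inputs_def)
  have uy: "\<forall>i<n. \<exists>!j. j < n \<and> j \<noteq> i \<and> y ! i = y ! j" using y by (auto simp: Col_neg_def)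
  define m where "m i = (THE j. j < n \<and> j \<noteq> i \<and> y ! i = y ! j)" for i
  have mP: "m i < n \<and> m i \<noteq> i \<and> y ! i = y ! (m i)" if "i < n" for i
    unfolding m_def using theI'[OF uy[rule_format, OF that]] .
  define A where "A = {i. i < n \<and> x ! i = y ! i}"
  define D where "D = {i. i < n \<and> x ! i \<noteq> y ! i}"
  have inj: "inj_on m A"
  proof (rule inj_onI)
    fix i k assume i: "i \<in> A" and k: "k \<in> A" and e: "m i = m k"
    have "i < n" "k < n" using i k by (auto simp: A_def)
    let ?j = "m i"
    have j: "?j < n" using mP[OF \<open>i<n\<close>] by simp
    have "i < n \<and> i \<noteq> ?j \<and> y ! ?j = y ! i" using mP[OF \<open>i<n\<close>] \<open>i<n\<close> by simp
    moreover have "k < n \<and> k \<noteq> ?j \<and> y ! ?j = y ! k" using mP[OF \<open>k<n\<close>] \<open>k<n\<close> e by simp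
    ultimately show "i = k" using uy[rule_format, OF j] by blast
  qed
  have sub: "m ` A \<subseteq> D"
  proof
    fix j assume "j \<in> m ` A"
    then obtain i where i: "i \<in> A" "j = m i" by blast
    have "i < n" "x ! i = y ! i" using i by (auto simp: A_def)
    note mi = mP[OF \<open>i<n\<close>]
    have "x ! (m i) \<noteq> x ! i" using dx lx mi \<open>i<n\<close> by (simp add: nth_eq_iff_index_eq)
    then show "j \<in> D" using mi i \<open>x ! i = y ! i\<close> by (auto simp: D_def)
  qed
  have "card A \<le> card D"
    using card_inj_on_le[OF inj sub] by (simp add: D_def)
  moreover have "card A + card D = n"
  proof -
    have "A \<union> D = {..<n}" "A \<inter> D = {}" by (auto simp: A_def D_def)
    then show ?thesis using card_Un_disjoint[of A D] by (simp add: A_def D_def)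
  qed
  ultimately show ?thesis by (simp add: D_def)
qed

lemma sum_bound:
  assumes "n \<ge> 2" and "n \<le> 2 * card {i. i < n \<and> x ! i \<noteq> y ! i}"
  shows "ereal_recip (\<Sum>i \<in> {i. i < n \<and> x ! i \<noteq> y ! i}. sqrt (1 / real n * (1 / real n))) \<le> 2"
proof -
  let ?D = "{i. i < n \<and> x ! i \<noteq> y ! i}"
  have s: "sqrt (1 / real n * (1 / real n)) = 1 / real n" using assms(1)
    by (simp add: real_sqrt_mult real_sqrt_divide)
  have c: "card ?D \<ge> 1" using assms by linarith
  have r: "real n \<le> 2 * real (card ?D)" using assms(2) by linarith
  have pos: "real (card ?D) / real n > 0" using c assms(1) by auto
  have "real n / real (card ?D) \<le> 2" using c r by (simp add: divide_le_eq)
  have sm: "(\<Sum>i \<in> ?D. sqrt (1 / real n * (1 / real n))) = real (card ?D) / real n"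
    using s by simp
  have "1 / (real (card ?D) / real n) = real n / real (card ?D)" by simp
  then show ?thesis using pos \<open>real n / real (card ?D) \<le> 2\<close> unfolding ereal_recip_def sm
    by (simp del: divide_eq_0_iff)
qed

theorem mainTheorem18:
  fixes n :: nat and \<Sigma> :: "'a set"
  assumes "even n" and "n \<ge> 2" and "finite \<Sigma>"
  shows "sumPI n (Col_dom n \<Sigma>) (Col n \<Sigma>) \<le> 2"
  unfolding sumPI_def
proof (rule INF_lower2)
  let ?p = "\<lambda>(x::'a list) (i::nat). 1 / real n"
  show "?p \<in> {p. \<forall>x\<in>Col_dom n \<Sigma>. prob_dist n (p x)}"
    using assms(2) by (simp add: prob_dist_def)
  show "(SUP xy\<in>{(x, y). x \<in> Col_dom n \<Sigma> \<and> y \<in> Col_dom n \<Sigma> \<and> Col n \<Sigma> x \<noteq> Col n \<Sigma> y}.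
          ereal_recip (\<Sum>i\<in>{i. i < n \<and> fst xy ! i \<noteq> snd xy ! i}.
             sqrt (?p (fst xy) i * ?p (snd xy) i))) \<le> 2"
  proof (rule SUP_least, clarify)
    fix x y assume xd: "x \<in> Col_dom n \<Sigma>" and yd: "y \<in> Col_dom n \<Sigma>" and ne: "Col n \<Sigma> x \<noteq> Col n \<Sigma> y"
    have "n \<le> 2 * card {i. i < n \<and> x ! i \<noteq> y ! i}"
    proof (cases "x \<in> Col_pos n \<Sigma>")
      case True
      then have "y \<in> Col_neg n \<Sigma>" using ne yd by (auto simp: Col_def Col_dom_def)
      then show ?thesis using disagree_card[OF True] by blast
    next
      case False
      then have "y \<in> Col_pos n \<Sigma>" "x \<in> Col_neg n \<Sigma>" using ne xd by (auto simp: Col_def Col_dom_def)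
      then have "n \<le> 2 * card {i. i < n \<and> y ! i \<noteq> x ! i}" using disagree_card by blast
      moreover have "{i. i < n \<and> y ! i \<noteq> x ! i} = {i. i < n \<and> x ! i \<noteq> y ! i}" by auto
      ultimately show ?thesis by simp
    qed
    then show "ereal_recip (\<Sum>i\<in>{i. i < n \<and> fst (x, y) ! i \<noteq> snd (x, y) ! i}.
             sqrt (?p (fst (x, y)) i * ?p (snd (x, y)) i)) \<le> 2"
      using sum_bound[OF assms(2)] by simp
  qed
qed

end
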